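(* There is no $\mathbf{v}=(v_1,v_2)\in H^5(-1,1)\times H^4(-1,1)$ with \[ \mathbf{L}_1\mathbf{v}:=\big(v_2-yv_1',\ v_1''+v_2-yv_2'\big)=\mathbf{g}_{0,1}, \] where $\mathbf{g}_{0,1}(y)=\big(\tfrac y2,\tfrac y2\big)$. Consequently, if $\mathbf{v}\in H^5(-1,1)\times H^4(-1,1)$ and $c\in\mathbb{C}$ satisfy $\mathbf{L}_1\mathbf{v}=c\,\mathbf{g}_{0,1}$, then $c=0$ and $\mathbf{v}\in\ker\mathbf{L}_1$.
   Context: $\mathbf{L}_1$ is the linearised operator of $\partial_{tt}u-\partial_{xx}u=(\partial_tu)^2$ in self-similar variables around the ODE blow-up solution $U=s+\kappa$; the paper's space $\mathcal{H}^4$ is $H^5(-1,1)\times H^4(-1,1)$. *)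

theory Defs
  imports "HOL-Analysis.Analysis"
begin

definition I1 :: "real set" where "I1 = {-1<..<1}"

definition test_fun :: "(real \<Rightarrow> real) \<Rightarrow> bool" where
  "test_fun \<phi> \<longleftrightarrow> (\<forall>k. (deriv ^^ k) \<phi> differentiable_on UNIV) \<and>
     (\<exists>a b. -1 < a \<and> b < 1 \<and> (\<forall>x. x \<notin> {a..b} \<longrightarrow> \<phi> x = 0))"

definition L2_I :: "(real \<Rightarrow> complex) \<Rightarrow> bool" where
  "L2_I g \<longleftrightarrow> g \<in> borel_measurable lborel \<and>
     set_integrable lborel I1 (\<lambda>x. (cmod (g x))^2)"

definition weak_deriv :: "(real \<Rightarrow> complex) \<Rightarrow> nat \<Rightarrow> (real \<Rightarrow> complex) \<Rightarrow> bool" where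
  "weak_deriv f j g \<longleftrightarrow> L2_I g \<and>
     (\<forall>\<phi>. test_fun \<phi> \<longrightarrow>
        (LINT x:I1|lborel. g x * complex_of_real (\<phi> x)) =
        (-1)^j * (LINT x:I1|lborel. f x * complex_of_real ((deriv ^^ j) \<phi> x)))"

definition sobolev_H :: "nat \<Rightarrow> (real \<Rightarrow> complex) \<Rightarrow> bool" where
  "sobolev_H k f \<longleftrightarrow> L2_I f \<and> (\<forall>j\<in>{1..k}. \<exists>g. weak_deriv f j g)"

end

theory Submission
  imports Defs "HOL-Computational_Algebra.Polynomial"
begin


definition smooth :: "(real \<Rightarrow> real) \<Rightarrow> bool" where
  "smooth f \<longleftrightarrow> (\<forall>k. (deriv ^^ k) f differentiable_on UNIV)"

definition Cn :: "nat \<Rightarrow> (real \<Rightarrow> real) \<Rightarrow> bool" where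
  "Cn n f \<longleftrightarrow> (\<forall>k<n. (deriv ^^ k) f differentiable_on UNIV)"

lemma smooth_Cn: "smooth f \<longleftrightarrow> (\<forall>n. Cn n f)"
  unfolding smooth_def Cn_def by (meson lessI)

lemma Cn_0[simp]: "Cn 0 f" by (simp add: Cn_def)

lemma Cn_Suc: "Cn (Suc n) f \<longleftrightarrow> f differentiable_on UNIV \<and> Cn n (deriv f)"
proof -
  have "(\<forall>k<Suc n. P k) \<longleftrightarrow> P 0 \<and> (\<forall>k<n. P (Suc k))" for P
    using less_Suc_eq_0_disj by auto
  then show ?thesis unfolding Cn_def by (simp add: funpow_Suc_right del: funpow.simps)
qed

lemma smooth_deriv: "smooth f \<Longrightarrow> smooth (deriv f)"
  unfolding smooth_def by (metis comp_apply funpow_Suc_right)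

lemma smooth_diff_on: "smooth f \<Longrightarrow> f differentiable_on UNIV"
  unfolding smooth_def by (metis funpow_0)

lemma smooth_DERIV: "smooth f \<Longrightarrow> (f has_real_derivative deriv f x) (at x)"
  using smooth_diff_on[of f] 
  by (simp add: DERIV_deriv_iff_real_differentiable differentiable_on_def)

lemma smooth_fd: "smooth f \<Longrightarrow> f field_differentiable at x"
  using smooth_DERIV field_differentiable_def by blast

lemma Cn_fd: "Cn (Suc n) f \<Longrightarrow> f field_differentiable at x"
  by (simp add: Cn_Suc differentiable_on_def field_differentiable_def
      DERIV_deriv_iff_real_differentiable[symmetric]) blast

lemma Cn_add: "Cn n f \<Longrightarrow> Cn n g \<Longrightarrow> Cn n (\<lambda>x. f x + g x)"
proof (induction n arbitrary: f g)
  case 0 then show ?case by simp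
next
  case (Suc n)
  have e: "deriv (\<lambda>x. f x + g x) = (\<lambda>x. deriv f x + deriv g x)"
    using Suc.prems by (intro ext deriv_add) (auto intro: Cn_fd)
  show ?case using Suc unfolding Cn_Suc e by (auto intro: differentiable_on_add)
qed

lemma Cn_cmult: "Cn n f \<Longrightarrow> Cn n (\<lambda>x. c * f x)"
proof (induction n arbitrary: f)
  case 0 then show ?case by simp
next
  case (Suc n)
  have e: "deriv (\<lambda>x. c * f x) = (\<lambda>x. c * deriv f x)"
    using Suc.prems by (intro ext deriv_cmult) (auto intro: Cn_fd)
  show ?case using Suc unfolding Cn_Suc e by (auto intro: differentiable_on_mult differentiable_on_const)
qed

lemma Cn_mult: "smooth f \<Longrightarrow> smooth g \<Longrightarrow> Cn n (\<lambda>x. f x * g x)"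
proof (induction n arbitrary: f g)
  case 0 then show ?case by simp
next
  case (Suc n)
  have e: "deriv (\<lambda>x. f x * g x) = (\<lambda>x. deriv f x * g x + f x * deriv g x)"
    using Suc.prems by (intro ext) (simp add: smooth_fd)
  have "Cn n (\<lambda>x. deriv f x * g x)" using Suc by (simp add: smooth_deriv)
  moreover have "Cn n (\<lambda>x. f x * deriv g x)" using Suc by (simp add: smooth_deriv)
  ultimately show ?case using Suc.prems unfolding Cn_Suc e
    by (auto intro: differentiable_on_mult smooth_diff_on Cn_add)
qed

lemma smooth_mult: "smooth f \<Longrightarrow> smooth g \<Longrightarrow> smooth (\<lambda>x. f x * g x)"
  using Cn_mult smooth_Cn by blast

lemma Cn_const: "Cn n (\<lambda>x. c)"
proof (induction n arbitrary: c)
  case 0 then show ?case by simp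
next
  case (Suc n)
  have e: "deriv (\<lambda>x. c) = (\<lambda>x. 0)" by (intro ext) simp
  show ?case using Suc unfolding Cn_Suc e by simp
qed

lemma smooth_const: "smooth (\<lambda>x. c)" using Cn_const smooth_Cn by blast

lemma smooth_id: "smooth (\<lambda>x. x)"
proof -
  have "Cn n (\<lambda>x. x)" for n
  proof (cases n)
    case 0 then show ?thesis by simp
  next
    case (Suc m)
    have e: "deriv (\<lambda>x. x) = (\<lambda>x::real. 1)" by (intro ext) simp
    show ?thesis unfolding Suc Cn_Suc e using Cn_const by simp
  qed
  then show ?thesis using smooth_Cn by blast
qed

lemma Cn_affine: "smooth f \<Longrightarrow> Cn n (\<lambda>x. f (a * x + b))"
proof (induction n arbitrary: f)
  case 0 then show ?case by simp
next
  case (Suc n)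
  have d: "((\<lambda>x. f (a * x + b)) has_real_derivative deriv f (a * x + b) * a) (at x)" for x
    by (rule DERIV_chain2[OF smooth_DERIV[OF Suc.prems]]) (auto intro!: derivative_eq_intros)
  have e: "deriv (\<lambda>x. f (a * x + b)) = (\<lambda>x. a * deriv f (a * x + b))"
    by (intro ext) (metis DERIV_imp_deriv d mult.commute)
  have "(\<lambda>x. f (a * x + b)) differentiable_on UNIV"
    using d by (meson differentiable_at_imp_differentiable_on real_differentiable_def)
  then show ?case unfolding Cn_Suc e using Suc.IH[OF smooth_deriv[OF Suc.prems]] Cn_cmult by blast
qed

lemma smooth_affine: "smooth f \<Longrightarrow> smooth (\<lambda>x. f (a * x + b))"
  using Cn_affine smooth_Cn by blast




definition Ef :: "real poly \<Rightarrow> real \<Rightarrow> real" where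
  "Ef p x = (if x > 0 then poly p (inverse x) * exp (- inverse x) else 0)"

definition Qp :: "real poly \<Rightarrow> real poly" where
  "Qp p = [:0,0,1:] * (p - pderiv p)"

lemma poly_exp_lim: "((\<lambda>u. poly q u * exp (- u)) \<longlongrightarrow> (0::real)) at_top"
proof -
  have e: "poly q u * exp (- u) = (\<Sum>i\<le>degree q. coeff q i * (u ^ i / exp u))" for u
    by (simp add: poly_altdef sum_distrib_right exp_minus divide_inverse mult.assoc)
  have "((\<lambda>u. \<Sum>i\<le>degree q. coeff q i * (u ^ i / exp u)) \<longlongrightarrow> (\<Sum>i\<le>degree q. coeff q i * 0)) at_top"
    by (intro tendsto_sum tendsto_mult tendsto_const tendsto_power_div_exp_0)
  then show ?thesis unfolding e by simp
qed

lemma Ef_deriv_pos: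
  assumes "x > 0"
  shows "(Ef p has_real_derivative Ef (Qp p) x) (at x)"
proof -
  have d: "((\<lambda>x. poly p (inverse x) * exp (- inverse x)) has_real_derivative
      poly (pderiv p) (inverse x) * (- inverse (x^2)) * exp (- inverse x)
      + poly p (inverse x) * (exp (- inverse x) * inverse (x^2))) (at x)"
    using assms
    by (auto intro!: derivative_eq_intros DERIV_chain2[where f="poly p"] poly_DERIV
        simp: power2_eq_square)
  have v: "poly (pderiv p) (inverse x) * (- inverse (x^2)) * exp (- inverse x)
      + poly p (inverse x) * (exp (- inverse x) * inverse (x^2)) = Ef (Qp p) x"
    using assms by (simp add: Ef_def Qp_def algebra_simps power2_eq_square power_inverse)
  show ?thesis
    by (rule has_field_derivative_transform_within_open[where S="{0<..}"])
       (use d v assms in \<open>auto simp: Ef_def\<close>)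
qed

lemma Ef_deriv_neg:
  assumes "x < 0"
  shows "(Ef p has_real_derivative Ef (Qp p) x) (at x)"
proof -
  have "((\<lambda>x. 0) has_real_derivative Ef (Qp p) x) (at x)" using assms by (simp add: Ef_def)
  then show ?thesis
    by (rule has_field_derivative_transform_within_open[where S="{..<0}"])
       (use assms in \<open>auto simp: Ef_def\<close>)
qed

lemma Ef_deriv_0:
  shows "(Ef p has_real_derivative Ef (Qp p) 0) (at 0)"
proof -
  have "((\<lambda>y. (Ef p y - Ef p 0) / (y - 0)) \<longlongrightarrow> 0) (at 0)"
  proof (rule filterlim_split_at)
    show "((\<lambda>y. (Ef p y - Ef p 0) / (y - 0)) \<longlongrightarrow> 0) (at_left 0)"
    proof (rule Lim_transform_eventually[OF tendsto_const])
      show "\<forall>\<^sub>F y in at_left 0. 0 = (Ef p y - Ef p 0) / (y - 0)"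
        unfolding eventually_at_left_field by (intro exI[of _ "-1"]) (auto simp: Ef_def)
    qed
  next
    have l: "((\<lambda>u. poly ([:0,1:] * p) u * exp (- u)) \<longlongrightarrow> (0::real)) at_top"
      by (rule poly_exp_lim)
    have "((\<lambda>y. poly ([:0,1:] * p) (inverse y) * exp (- inverse y)) \<longlongrightarrow> (0::real)) (at_right 0)"
      by (rule filterlim_compose[OF l filterlim_inverse_at_top_right])
    then show "((\<lambda>y. (Ef p y - Ef p 0) / (y - 0)) \<longlongrightarrow> 0) (at_right 0)"
    proof (rule Lim_transform_eventually)
      show "\<forall>\<^sub>F y in at_right 0. poly ([:0,1:] * p) (inverse y) * exp (- inverse y) = (Ef p y - Ef p 0) / (y - 0)"
        unfolding eventually_at_right_field by (intro exI[of _ 1]) (auto simp: Ef_def field_simps)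
    qed
  qed
  then show ?thesis unfolding has_field_derivative_iff by (simp add: Ef_def)
qed

lemma Ef_deriv: "(Ef p has_real_derivative Ef (Qp p) x) (at x)"
  using Ef_deriv_0 Ef_deriv_neg Ef_deriv_pos by (metis linorder_neqE_linordered_idom)

lemma smooth_Ef: "smooth (Ef p)"
proof -
  have "\<forall>p. (deriv ^^ k) (Ef p) differentiable_on UNIV" for k
  proof (induction k)
    case 0
    have "Ef p differentiable (at x)" for p x
      using Ef_deriv real_differentiable_def by blast
    then show ?case by (simp add: differentiable_at_imp_differentiable_on)
  next
    case (Suc k)
    have "deriv (Ef p) = Ef (Qp p)" for p by (intro ext DERIV_imp_deriv Ef_deriv)
    then show ?case using Suc by (simp add: funpow_Suc_right del: funpow.simps)
  qed
  then show ?thesis unfolding smooth_def by blast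
qed

definition hb :: "real \<Rightarrow> real" where "hb x = (if x > 0 then exp (- inverse x) else 0)"

lemma hb_Ef: "hb = Ef 1" by (intro ext) (simp add: hb_def Ef_def)

lemma smooth_hb: "smooth hb" unfolding hb_Ef by (rule smooth_Ef)




lemma test_fun_iff: "test_fun \<phi> \<longleftrightarrow> smooth \<phi> \<and>
   (\<exists>a b. -1 < a \<and> b < 1 \<and> (\<forall>x. x \<notin> {a..b} \<longrightarrow> \<phi> x = 0))"
  by (simp add: test_fun_def smooth_def)

lemma deriv_vanish:
  fixes g :: "real \<Rightarrow> real"
  assumes "\<forall>x. x \<notin> {a..b} \<longrightarrow> g x = 0" "x \<notin> {a..b}"
  shows "deriv g x = 0"
proof -
  have "((\<lambda>x. 0) has_real_derivative 0) (at x)" by simp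
  then have "(g has_real_derivative 0) (at x)"
    by (rule has_field_derivative_transform_within_open[where S="- {a..b}"])
       (use assms in auto)
  then show ?thesis by (rule DERIV_imp_deriv)
qed

lemma test_fun_deriv: "test_fun \<phi> \<Longrightarrow> test_fun (deriv \<phi>)"
  unfolding test_fun_iff using smooth_deriv deriv_vanish by meson

lemma deriv_xmult: "smooth \<phi> \<Longrightarrow> deriv (\<lambda>x. x * \<phi> x) = (\<lambda>x. \<phi> x + x * deriv \<phi> x)"
  by (intro ext) (simp add: smooth_fd)

lemma test_fun_xmult: "test_fun \<phi> \<Longrightarrow> test_fun (\<lambda>x. x * \<phi> x)"
  unfolding test_fun_iff using smooth_mult[OF smooth_id] by auto

lemma smooth_cont: "smooth f \<Longrightarrow> continuous_on UNIV f"
  using differentiable_imp_continuous_on smooth_diff_on by blast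

lemma test_fun_bdd: assumes "test_fun \<phi>" shows "\<exists>B. \<forall>x. \<bar>\<phi> x\<bar> \<le> B"
proof -
  obtain a b where ab: "\<forall>x. x \<notin> {a..b} \<longrightarrow> \<phi> x = 0" and s: "smooth \<phi>"
    using assms unfolding test_fun_iff by blast
  have "compact (\<phi> ` {a..b})"
    using smooth_cont[OF s] by (meson compact_Icc compact_continuous_image continuous_on_subset subset_UNIV)
  then obtain B where B: "\<forall>y\<in>\<phi> ` {a..b}. norm y \<le> B" using compact_imp_bounded bounded_iff by metis
  show ?thesis
  proof (intro exI allI)
    fix x show "\<bar>\<phi> x\<bar> \<le> max B 0" using B ab by (cases "x \<in> {a..b}") force+
  qed
qed

lemma test_fun_meas: "test_fun \<phi> \<Longrightarrow> \<phi> \<in> borel_measurable lborel"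
  using smooth_cont borel_measurable_continuous_onI test_fun_iff by auto

lemma test_fun_supp:
  assumes "test_fun ph"
  obtains a b where "-1 < a" "a \<le> b" "b < 1" "\<forall>x. x \<notin> {a..b} \<longrightarrow> ph x = 0" "smooth ph"
proof -
  obtain a b where a: "-1 < a" and b: "b < 1" and ab: "\<forall>x. x \<notin> {a..b} \<longrightarrow> ph x = 0"
    and s: "smooth ph"
    using assms unfolding test_fun_iff by blast
  show ?thesis
  proof (cases "a \<le> b")
    case True then show ?thesis using that a b ab s by blast
  next
    case False
    then have "\<forall>x. x \<notin> {0..0} \<longrightarrow> ph x = 0" using ab by auto
    then show ?thesis using that[of 0 0] s by simp
  qed
qed

lemma test_fun_FTC:
  assumes "test_fun ch"
  shows "(LINT x:I1|lborel. deriv ch x) = 0"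
proof -
  obtain a b where a: "-1 < a" and "a \<le> b" and b: "b < 1" and ab: "\<forall>x. x \<notin> {a..b} \<longrightarrow> ch x = 0"
    and s: "smooth ch"
    using assms test_fun_supp by blast
  define c where "c = (a - 1) / 2"
  define d where "d = (b + 1) / 2"
  have cd: "c \<le> d" "-1 < c" "d < 1" "c < a" "b < d" using a b \<open>a \<le> b\<close> by (auto simp: c_def d_def)
  have z: "\<forall>x. x \<notin> {a..b} \<longrightarrow> deriv ch x = 0" using deriv_vanish[OF ab] by blast
  have "(LINT x:I1|lborel. deriv ch x) = integral\<^sup>L lborel (\<lambda>x. indicator {c..d} x *\<^sub>R deriv ch x)"
    unfolding set_lebesgue_integral_def
  proof (intro Bochner_Integration.integral_cong refl)
    fix x show "indicator I1 x *\<^sub>R deriv ch x = indicator {c..d} x *\<^sub>R deriv ch x"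
      using z cd by (cases "x \<in> {a..b}") (auto simp: I1_def indicator_def)
  qed
  also have "\<dots> = ch d - ch c"
  proof (rule integral_FTC_atLeastAtMost[OF cd(1)])
    fix x show "(ch has_vector_derivative deriv ch x) (at x within {c..d})"
      using smooth_DERIV[OF s] has_real_derivative_iff_has_vector_derivative
      by (metis has_vector_derivative_at_within)
  next
    show "continuous_on {c..d} (deriv ch)"
      using smooth_cont[OF smooth_deriv[OF s]] continuous_on_subset by blast
  qed
  also have "\<dots> = 0" using ab cd by auto
  finally show ?thesis .
qed

definition phid :: "real \<Rightarrow> real \<Rightarrow> real" where
  "phid \<delta> x = hb (inverse \<delta> * x + (-(1 - 2*\<delta>)/\<delta>)) * hb ((- inverse \<delta>) * x + (1 - \<delta>)/\<delta>)"

lemma hb_nonneg: "0 \<le> hb x" by (simp add: hb_def)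
lemma hb_le1: "hb x \<le> 1" by (simp add: hb_def)

lemma phid_test:
  assumes "0 < \<delta>" "\<delta> < 1"
  shows "test_fun (phid \<delta>)"
  unfolding test_fun_iff
proof (intro conjI exI)
  show "smooth (phid \<delta>)" unfolding phid_def
    by (intro smooth_mult smooth_affine smooth_hb)
  show "-1 < 1 - 2*\<delta>" "1 - \<delta> < 1" using assms by auto
  show "\<forall>x. x \<notin> {1 - 2*\<delta>..1 - \<delta>} \<longrightarrow> phid \<delta> x = 0"
  proof (intro allI impI)
    fix x assume "x \<notin> {1 - 2*\<delta>..1 - \<delta>}"
    then have "x < 1 - 2*\<delta> \<or> x > 1 - \<delta>" by auto
    moreover have "inverse \<delta> * x + (-(1 - 2*\<delta>)/\<delta>) = (x - (1 - 2*\<delta>)) / \<delta>"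
      "(- inverse \<delta>) * x + (1 - \<delta>)/\<delta> = ((1 - \<delta>) - x) / \<delta>"
      using assms by (auto simp: field_simps)
    ultimately have "inverse \<delta> * x + (-(1 - 2*\<delta>)/\<delta>) \<le> 0 \<or> (- inverse \<delta>) * x + (1 - \<delta>)/\<delta> \<le> 0"
      using assms by (auto simp: divide_nonpos_pos)
    then show "phid \<delta> x = 0" unfolding phid_def hb_def by auto
  qed
qed




definition ip :: "(real \<Rightarrow> complex) \<Rightarrow> (real \<Rightarrow> real) \<Rightarrow> complex" where
  "ip g f = (LINT x:I1|lborel. g x * complex_of_real (f x))"

definition bdd_I :: "(real \<Rightarrow> real) \<Rightarrow> bool" where
  "bdd_I f \<longleftrightarrow> f \<in> borel_measurable lborel \<and> (\<exists>B. \<forall>x\<in>I1. \<bar>f x\<bar> \<le> B)"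

lemma I1_sets[measurable]: "I1 \<in> sets lborel" by (simp add: I1_def)

lemma I1_int: "integrable lborel (indicator I1 :: real \<Rightarrow> real)"
  by (rule integrable_real_indicator) (auto simp: I1_def)

lemma ip_int:
  assumes g: "L2_I g" and f: "bdd_I f"
  shows "set_integrable lborel I1 (\<lambda>x. g x * complex_of_real (f x))"
proof -
  obtain B where B: "\<forall>x\<in>I1. \<bar>f x\<bar> \<le> B" using f bdd_I_def by blast
  have gm[measurable]: "g \<in> borel_measurable lborel" using g L2_I_def by blast
  have fm[measurable]: "f \<in> borel_measurable lborel" using f bdd_I_def by blast
  have i2: "integrable lborel (\<lambda>x. indicator I1 x *\<^sub>R (cmod (g x))^2)"
    using g unfolding L2_I_def set_integrable_def by blast
  let ?w = "\<lambda>x. max B 0 * (indicator I1 x + indicator I1 x *\<^sub>R (cmod (g x))^2)"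
  have wi: "integrable lborel ?w" using i2 I1_int by auto
  show ?thesis unfolding set_integrable_def
  proof (rule Bochner_Integration.integrable_bound[OF wi])
    show "(\<lambda>x. indicator I1 x *\<^sub>R (g x * complex_of_real (f x))) \<in> borel_measurable lborel"
      by measurable
    show "AE x in lborel. norm (indicator I1 x *\<^sub>R (g x * complex_of_real (f x))) \<le> norm (?w x)"
    proof (intro AE_I2)
      fix x
      show "norm (indicator I1 x *\<^sub>R (g x * complex_of_real (f x))) \<le> norm (?w x)"
      proof (cases "x \<in> I1")
        case True
        have "0 \<le> (cmod (g x) - 1/2)^2" by simp
        then have t: "cmod (g x) \<le> 1 + (cmod (g x))^2"
          by (simp add: power2_eq_square algebra_simps)
        have "norm (g x * complex_of_real (f x)) = cmod (g x) * \<bar>f x\<bar>" by (simp add: norm_mult)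
        also have "\<dots> \<le> (1 + (cmod (g x))^2) * max B 0"
          using B True t by (intro mult_mono) auto
        finally show ?thesis using True by (simp add: abs_mult mult.commute)
      qed simp
    qed
  qed
qed

lemma ip_add:
  assumes "L2_I g" "bdd_I f1" "bdd_I f2"
  shows "ip g f1 + ip g f2 = ip g (\<lambda>x. f1 x + f2 x)"
  using set_integral_add(2)[OF ip_int[OF assms(1,2)] ip_int[OF assms(1,3)]]
  unfolding ip_def by (simp add: distrib_left)

lemma ip_diff:
  assumes "L2_I g" "bdd_I f1" "bdd_I f2"
  shows "ip g f1 - ip g f2 = ip g (\<lambda>x. f1 x - f2 x)"
  using set_integral_diff(2)[OF ip_int[OF assms(1,2)] ip_int[OF assms(1,3)]]
  unfolding ip_def by (simp add: right_diff_distrib)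

lemma ip_cong: "(\<And>x. x \<in> I1 \<Longrightarrow> f1 x = f2 x) \<Longrightarrow> ip g f1 = ip g f2"
  unfolding ip_def by (intro set_lebesgue_integral_cong) (auto simp: I1_def)

lemma test_bdd: "test_fun f \<Longrightarrow> bdd_I f"
  unfolding bdd_I_def using test_fun_meas test_fun_bdd by blast

lemma bdd_xmult: "bdd_I f \<Longrightarrow> bdd_I (\<lambda>x. x * f x)"
proof -
  assume f: "bdd_I f"
  then obtain B where B: "\<forall>x\<in>I1. \<bar>f x\<bar> \<le> B" using bdd_I_def by blast
  have [measurable]: "f \<in> borel_measurable lborel" using f bdd_I_def by blast
  have "\<forall>x\<in>I1. \<bar>x * f x\<bar> \<le> B"
  proof
    fix x assume x: "x \<in> I1"
    have "\<bar>x * f x\<bar> = \<bar>x\<bar> * \<bar>f x\<bar>" by (simp add: abs_mult)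
    also have "\<dots> \<le> 1 * \<bar>f x\<bar>" using x by (intro mult_right_mono) (auto simp: I1_def)
    also have "\<dots> \<le> B" using B x by simp
    finally show "\<bar>x * f x\<bar> \<le> B" .
  qed
  moreover have "(\<lambda>x. x * f x) \<in> borel_measurable lborel" by measurable
  ultimately show ?thesis unfolding bdd_I_def by blast
qed

lemma L2_bdd:
  assumes [measurable]: "g \<in> borel_measurable lborel" and B: "\<forall>x\<in>I1. cmod (g x) \<le> B"
  shows "L2_I g"
  unfolding L2_I_def
proof
  show "g \<in> borel_measurable lborel" by fact
  have "set_integrable lborel I1 (\<lambda>x. (cmod (g x))^2 * 1)"
    unfolding set_integrable_def
  proof (rule Bochner_Integration.integrable_bound)
    show "integrable lborel (\<lambda>x. B^2 * indicator I1 x)" using I1_int by auto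
    show "(\<lambda>x. indicator I1 x *\<^sub>R ((cmod (g x))\<^sup>2 * 1)) \<in> borel_measurable lborel" by measurable
    show "AE x in lborel. norm (indicator I1 x *\<^sub>R ((cmod (g x))\<^sup>2 * 1)) \<le> norm (B\<^sup>2 * indicator I1 x)"
      using B by (intro AE_I2) (auto simp: indicator_def abs_square_le_1 power_mono)
  qed
  then show "set_integrable lborel I1 (\<lambda>x. (cmod (g x))\<^sup>2)" by simp
qed

definition hf :: "real \<Rightarrow> complex" where "hf x = complex_of_real (x / 2)"

lemma L2_hf: "L2_I hf"
proof (rule L2_bdd[where B=1])
  have "continuous_on UNIV hf" unfolding hf_def by (intro continuous_intros) auto
  then show "hf \<in> borel_measurable lborel"
    using borel_measurable_continuous_onI by simp
  show "\<forall>x\<in>I1. cmod (hf x) \<le> 1"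
  proof
    fix x assume "x \<in> I1"
    then have "\<bar>x\<bar> < 1" by (auto simp: I1_def)
    then show "cmod (hf x) \<le> 1" unfolding hf_def norm_of_real by simp
  qed
qed




lemma wd1: "weak_deriv v 1 d \<Longrightarrow> test_fun f \<Longrightarrow> ip d f = - ip v (deriv f)"
  unfolding weak_deriv_def ip_def by simp

lemma wd2: "weak_deriv v 2 d \<Longrightarrow> test_fun f \<Longrightarrow> ip d f = ip v (deriv (deriv f))"
  unfolding weak_deriv_def ip_def by (simp add: numeral_2_eq_2)

lemma wdL2: "weak_deriv v j d \<Longrightarrow> L2_I d" unfolding weak_deriv_def by blast

lemma L2_meas[measurable_dest]: "L2_I g \<Longrightarrow> g \<in> borel_measurable lborel" unfolding L2_I_def by blast

lemma bdd_meas: "bdd_I f \<Longrightarrow> f \<in> borel_measurable lborel" unfolding bdd_I_def by blast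

lemma E1:
  assumes d1: "L2_I d1" and v2: "L2_I v2"
    and ae: "AE y in lborel. y \<in> I1 \<longrightarrow> v2 y - complex_of_real y * d1 y = complex_of_real (y/2)"
    and f: "bdd_I f"
  shows "ip v2 f = ip d1 (\<lambda>y. y * f y) + ip hf f"
proof -
  have [measurable]: "d1 \<in> borel_measurable lborel" "v2 \<in> borel_measurable lborel"
    "f \<in> borel_measurable lborel" using d1 v2 f L2_meas bdd_meas by auto
  have "ip v2 f = (LINT x:I1|lborel. (complex_of_real x * d1 x + hf x) * complex_of_real (f x))"
    unfolding ip_def
  proof (rule set_lebesgue_integral_cong_AE)
    show "AE x\<in>I1 in lborel. v2 x * complex_of_real (f x) =
        (complex_of_real x * d1 x + hf x) * complex_of_real (f x)"
      using ae
    proof eventually_elim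
      case (elim x)
      show ?case
      proof
        assume "x \<in> I1"
        with elim have "v2 x - complex_of_real x * d1 x = complex_of_real (x/2)" by blast
        then have "v2 x = complex_of_real (x/2) + complex_of_real x * d1 x" by (rule diff_eq_eq[THEN iffD1])
        then show "v2 x * complex_of_real (f x) = (complex_of_real x * d1 x + hf x) * complex_of_real (f x)"
          by (simp add: hf_def algebra_simps)
      qed
    qed
  qed (auto simp: hf_def I1_def)
  also have "\<dots> = (LINT x:I1|lborel. d1 x * complex_of_real (x * f x) + hf x * complex_of_real (f x))"
    by (intro set_lebesgue_integral_cong) (auto simp: I1_def algebra_simps)
  also have "\<dots> = ip d1 (\<lambda>y. y * f y) + ip hf f"
    unfolding ip_def
    by (rule set_integral_add(2)[OF ip_int[OF d1 bdd_xmult[OF f]] ip_int[OF L2_hf f]])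
  finally show ?thesis .
qed

lemma E2:
  assumes dd1: "L2_I dd1" and v2: "L2_I v2" and d2: "L2_I d2"
    and ae: "AE y in lborel. y \<in> I1 \<longrightarrow> dd1 y + v2 y - complex_of_real y * d2 y = complex_of_real (y/2)"
    and f: "bdd_I f"
  shows "ip dd1 f = ip hf f - ip v2 f + ip d2 (\<lambda>y. y * f y)"
proof -
  have [measurable]: "dd1 \<in> borel_measurable lborel" "v2 \<in> borel_measurable lborel"
    "d2 \<in> borel_measurable lborel"
    "f \<in> borel_measurable lborel" using dd1 v2 d2 f L2_meas bdd_meas by auto
  have "ip dd1 f = (LINT x:I1|lborel. (hf x - v2 x + complex_of_real x * d2 x) * complex_of_real (f x))"
    unfolding ip_def
  proof (rule set_lebesgue_integral_cong_AE)
    show "AE x\<in>I1 in lborel. dd1 x * complex_of_real (f x) =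
        (hf x - v2 x + complex_of_real x * d2 x) * complex_of_real (f x)"
      using ae
    proof eventually_elim
      case (elim x)
      show ?case
      proof
        assume "x \<in> I1"
        with elim have "dd1 x + v2 x - complex_of_real x * d2 x = complex_of_real (x/2)" by blast
        then have "dd1 x + v2 x = complex_of_real (x/2) + complex_of_real x * d2 x" by (rule diff_eq_eq[THEN iffD1])
        then have eq: "dd1 x = (complex_of_real (x/2) + complex_of_real x * d2 x) - v2 x" by (metis add_diff_cancel_right')
        show "dd1 x * complex_of_real (f x) = (hf x - v2 x + complex_of_real x * d2 x) * complex_of_real (f x)"
          by (subst eq) (simp add: hf_def algebra_simps)
      qed
    qed
  qed (auto simp: hf_def I1_def)
  also have "\<dots> = (LINT x:I1|lborel. (hf x * complex_of_real (f x) - v2 x * complex_of_real (f x))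
       + d2 x * complex_of_real (x * f x))"
    by (intro set_lebesgue_integral_cong) (auto simp: I1_def algebra_simps)
  also have "\<dots> = ip hf f - ip v2 f + ip d2 (\<lambda>y. y * f y)"
  proof -
    have i1: "set_integrable lborel I1 (\<lambda>x. hf x * complex_of_real (f x))" by (rule ip_int[OF L2_hf f])
    have i2: "set_integrable lborel I1 (\<lambda>x. v2 x * complex_of_real (f x))" by (rule ip_int[OF v2 f])
    have i3: "set_integrable lborel I1 (\<lambda>x. d2 x * complex_of_real (x * f x))"
      using ip_int[OF d2 bdd_xmult[OF f]] by simp
    show ?thesis unfolding ip_def
      by (simp only: set_integral_add(2)[OF set_integral_diff(1)[OF i1 i2] i3] set_integral_diff(2)[OF i1 i2])
  qed
  finally show ?thesis .
qed

lemma key: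
  assumes v1: "L2_I v1" and v2: "L2_I v2"
    and w1: "weak_deriv v1 1 d1" and w2: "weak_deriv v1 2 dd1" and w3: "weak_deriv v2 1 d2"
    and ae1: "AE y in lborel. y \<in> I1 \<longrightarrow> v2 y - complex_of_real y * d1 y = complex_of_real (y/2)"
    and ae2: "AE y in lborel. y \<in> I1 \<longrightarrow> dd1 y + v2 y - complex_of_real y * d2 y = complex_of_real (y/2)"
    and phi: "test_fun \<phi>"
  shows "ip dd1 (\<lambda>x. \<phi> x - x * (x * \<phi> x)) = ip hf \<phi>"
proof -
  have d1: "L2_I d1" and dd1: "L2_I dd1" and d2: "L2_I d2" using w1 w2 w3 wdL2 by blast+
  have s: "smooth \<phi>" using phi test_fun_iff by blast
  define \<psi> where "\<psi> = (\<lambda>x. x * \<phi> x)"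
  define \<rho> where "\<rho> = (\<lambda>x. \<phi> x + x * deriv \<phi> x)"
  define ch where "ch = (\<lambda>x. x * \<psi> x)"
  have tpsi: "test_fun \<psi>" unfolding \<psi>_def by (rule test_fun_xmult[OF phi])
  have dpsi: "deriv \<psi> = \<rho>" unfolding \<psi>_def \<rho>_def by (rule deriv_xmult[OF s])
  have trho: "test_fun \<rho>" using test_fun_deriv[OF tpsi] dpsi by simp
  have tch: "test_fun ch" unfolding ch_def by (rule test_fun_xmult[OF tpsi])
  have dch: "deriv ch = (\<lambda>x. \<psi> x + x * \<rho> x)"
    unfolding ch_def using deriv_xmult[of \<psi>] tpsi test_fun_iff dpsi by auto
  have tdch: "test_fun (deriv ch)" by (rule test_fun_deriv[OF tch])
  have b_phi: "bdd_I \<phi>" and b_psi: "bdd_I \<psi>" and b_rho: "bdd_I \<rho>" and b_xrho: "bdd_I (\<lambda>x. x * \<rho> x)"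
    and b_ch: "bdd_I ch"
    using phi tpsi trho tch test_bdd bdd_xmult by auto
  have e2: "ip dd1 \<phi> = ip hf \<phi> - ip v2 \<phi> + ip d2 \<psi>"
    using E2[OF dd1 v2 d2 ae2 b_phi] unfolding \<psi>_def .
  have e1a: "ip v2 \<phi> = ip d1 \<psi> + ip hf \<phi>"
    using E1[OF d1 v2 ae1 b_phi] unfolding \<psi>_def .
  have c: "ip d2 \<psi> = - ip v2 \<rho>" using wd1[OF w3 tpsi] dpsi by simp
  have e1b: "ip v2 \<rho> = ip d1 (\<lambda>x. x * \<rho> x) + ip hf \<rho>"
    using E1[OF d1 v2 ae1 b_rho] .
  have add: "ip d1 \<psi> + ip d1 (\<lambda>x. x * \<rho> x) = ip d1 (deriv ch)"
    unfolding dch by (rule ip_add[OF d1 b_psi b_xrho])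
  have a: "ip d1 (deriv ch) = - ip v1 (deriv (deriv ch))" by (rule wd1[OF w1 tdch])
  have b: "ip dd1 ch = ip v1 (deriv (deriv ch))" by (rule wd2[OF w2 tch])
  have ftc: "ip hf \<phi> + ip hf \<rho> = 0"
  proof -
    have "ip hf \<phi> + ip hf \<rho> = ip hf (\<lambda>x. \<phi> x + \<rho> x)" by (rule ip_add[OF L2_hf b_phi b_rho])
    also have "\<dots> = (LINT x:I1|lborel. complex_of_real (deriv ch x / 2))"
      unfolding ip_def hf_def dch \<psi>_def \<rho>_def
      by (intro set_lebesgue_integral_cong) (auto simp: I1_def algebra_simps simp flip: of_real_mult)
    also have "\<dots> = 0"
      by (simp add: set_integral_complex_of_real test_fun_FTC[OF tch])
    finally show ?thesis .
  qed
  have hr: "ip hf \<rho> = - ip hf \<phi>" using ftc by (simp add: eq_neg_iff_add_eq_0 add.commute)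
  have "ip dd1 \<phi> = ip hf \<phi> - (ip d1 \<psi> + ip hf \<phi>) + (- (ip d1 (\<lambda>x. x * \<rho> x) + ip hf \<rho>))"
    using e2 e1a c e1b by simp
  also have "\<dots> = - (ip d1 \<psi> + ip d1 (\<lambda>x. x * \<rho> x)) - ip hf \<rho>" by (simp add: algebra_simps)
  also have "\<dots> = ip dd1 ch + ip hf \<phi>" using add a b hr by simp
  finally have "ip dd1 \<phi> - ip dd1 ch = ip hf \<phi>" by simp
  moreover have "ip dd1 \<phi> - ip dd1 ch = ip dd1 (\<lambda>x. \<phi> x - ch x)"
    by (rule ip_diff[OF dd1 b_phi b_ch])
  ultimately show ?thesis unfolding ch_def \<psi>_def by simp
qed




lemma bdd_int: assumes "bdd_I f" shows "set_integrable lborel I1 f"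
proof -
  obtain B where B: "\<forall>x\<in>I1. \<bar>f x\<bar> \<le> B" using assms bdd_I_def by blast
  have [measurable]: "f \<in> borel_measurable lborel" using assms bdd_I_def by blast
  show ?thesis unfolding set_integrable_def
  proof (rule Bochner_Integration.integrable_bound)
    show "integrable lborel (\<lambda>x. B * indicator I1 x)" using I1_int by auto
    show "(\<lambda>x. indicator I1 x *\<^sub>R f x) \<in> borel_measurable lborel" by measurable
    show "AE x in lborel. norm (indicator I1 x *\<^sub>R f x) \<le> norm (B * indicator I1 x)"
      using B by (intro AE_I2) (auto simp: indicator_def)
  qed
qed

lemma bdd_ind: "a \<le> b \<Longrightarrow> bdd_I (\<lambda>x. c * indicator {a..b} x)"
  unfolding bdd_I_def by (intro conjI exI[of _ "\<bar>c\<bar>"]) (auto simp: indicator_def)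

lemma bdd_ind2: "bdd_I (\<lambda>x. c * indicator {a..<b} x)"
  unfolding bdd_I_def by (intro conjI exI[of _ "\<bar>c\<bar>"]) (auto simp: indicator_def)

lemma hb_ge: "t \<ge> 1/4 \<Longrightarrow> hb t \<ge> exp (-4)"
proof -
  assume t: "t \<ge> 1/4"
  then have "inverse t \<le> 4" using le_imp_inverse_le[of "1/4" t] by simp
  then show ?thesis using t by (simp add: hb_def)
qed

lemma phid_props:
  assumes d: "0 < \<delta>" "\<delta> \<le> 1/4"
  shows "0 \<le> phid \<delta> x" "phid \<delta> x \<le> 1"
    "x \<notin> {1 - 2*\<delta>..1 - \<delta>} \<Longrightarrow> phid \<delta> x = 0"
    "x \<in> {1 - 7*\<delta>/4 .. 1 - 5*\<delta>/4} \<Longrightarrow> phid \<delta> x \<ge> exp (-8)"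
proof -
  show "0 \<le> phid \<delta> x" unfolding phid_def by (simp add: hb_nonneg)
  show "phid \<delta> x \<le> 1" unfolding phid_def by (intro mult_le_one hb_le1 hb_nonneg)
  have e1: "inverse \<delta> * x + (-(1 - 2*\<delta>)/\<delta>) = (x - (1 - 2*\<delta>)) / \<delta>"
    and e2: "(- inverse \<delta>) * x + (1 - \<delta>)/\<delta> = ((1 - \<delta>) - x) / \<delta>"
    using d by (auto simp: field_simps)
  show "x \<notin> {1 - 2*\<delta>..1 - \<delta>} \<Longrightarrow> phid \<delta> x = 0"
    using phid_test[of \<delta>] d unfolding test_fun_iff
  proof -
    assume x: "x \<notin> {1 - 2*\<delta>..1 - \<delta>}"
    then have "x < 1 - 2*\<delta> \<or> x > 1 - \<delta>" by auto
    then have "(x - (1 - 2*\<delta>)) / \<delta> \<le> 0 \<or> ((1 - \<delta>) - x) / \<delta> \<le> 0"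
      using d by (auto simp: divide_nonpos_pos)
    then show "phid \<delta> x = 0" unfolding phid_def e1 e2 hb_def by auto
  qed
  assume x: "x \<in> {1 - 7*\<delta>/4 .. 1 - 5*\<delta>/4}"
  have a1: "(x - (1 - 2*\<delta>)) / \<delta> \<ge> 1/4" using x d by (simp add: field_simps)
  have a2: "((1 - \<delta>) - x) / \<delta> \<ge> 1/4" using x d by (simp add: field_simps)
  have "exp (-4) * exp (-4) \<le> phid \<delta> x"
    unfolding phid_def e1 e2 using hb_ge[OF a1] hb_ge[OF a2]
    by (intro mult_mono) (auto simp: hb_nonneg)
  then show "phid \<delta> x \<ge> exp (-8)" by (simp add: mult_exp_exp)
qed

lemma lower_bound:
  assumes dd1: "L2_I dd1"
    and keyid: "\<And>\<phi>. test_fun \<phi> \<Longrightarrow> ip dd1 (\<lambda>x. \<phi> x - x * (x * \<phi> x)) = ip hf \<phi>"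
    and d: "0 < \<delta>" "\<delta> \<le> 1/4"
  shows "exp (-8) / 32 \<le> (LINT x:I1|lborel. cmod (dd1 x) * indicator {1 - 2*\<delta>..<1} x)"
proof -
  define \<phi> where "\<phi> = phid \<delta>"
  have t: "test_fun \<phi>" unfolding \<phi>_def using phid_test d by simp
  have b\<phi>: "bdd_I \<phi>" using t test_bdd by blast
  define \<psi> where "\<psi> = (\<lambda>x. \<phi> x - x * (x * \<phi> x))"
  have b\<psi>: "bdd_I \<psi>" unfolding \<psi>_def
  proof -
    have "bdd_I (\<lambda>x. x * (x * \<phi> x))" by (intro bdd_xmult b\<phi>)
    then show "bdd_I (\<lambda>x. \<phi> x - x * (x * \<phi> x))"
      using b\<phi> unfolding bdd_I_def
      by (auto intro!: borel_measurable_diff) (metis abs_triangle_ineq4 add_mono order_trans)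
  qed
  have dm[measurable]: "dd1 \<in> borel_measurable lborel" using dd1 L2_I_def by blast
  let ?T = "LINT x:I1|lborel. cmod (dd1 x) * indicator {1 - 2*\<delta>..<1} x"
  have int1: "set_integrable lborel I1 (\<lambda>x. dd1 x * complex_of_real (\<psi> x))" by (rule ip_int[OF dd1 b\<psi>])
  have int2: "set_integrable lborel I1 (\<lambda>x. norm (dd1 x * complex_of_real (4 * \<delta> * indicator {1 - 2*\<delta>..<1} x)))"
    by (rule set_integrable_norm[OF ip_int[OF dd1 bdd_ind2]])
  have "cmod (ip dd1 \<psi>) \<le> (LINT x:I1|lborel. norm (dd1 x * complex_of_real (\<psi> x)))"
    unfolding ip_def by (rule set_integral_norm_bound[OF int1])
  also have "\<dots> \<le> (LINT x:I1|lborel. norm (dd1 x * complex_of_real (4 * \<delta> * indicator {1 - 2*\<delta>..<1} x)))"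
  proof (rule set_integral_mono[OF set_integrable_norm[OF int1] int2])
    fix x assume x: "x \<in> I1"
    have "\<bar>\<psi> x\<bar> \<le> 4 * \<delta> * indicator {1 - 2*\<delta>..<1} x"
    proof (cases "x \<in> {1 - 2*\<delta>..1 - \<delta>}")
      case True
      have p: "0 \<le> \<phi> x" "\<phi> x \<le> 1" using phid_props[OF d] \<phi>_def by auto
      have "\<psi> x = ((1 - x) * (1 + x)) * \<phi> x" unfolding \<psi>_def by (simp add: algebra_simps)
      moreover have h: "0 \<le> 1 - x" "1 - x \<le> 2*\<delta>" "0 \<le> 1 + x" "1 + x \<le> 2"
        using True d by auto
      moreover have q0: "0 \<le> (1 - x) * (1 + x)" using h by simp
      moreover have q1: "(1 - x) * (1 + x) \<le> 2*\<delta> * 2" using h by (intro mult_mono) auto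
      ultimately have A: "((1 - x) * (1 + x)) * \<phi> x \<le> (2*\<delta> * 2) * 1" using p by (intro mult_mono) auto
      have "\<bar>\<psi> x\<bar> = ((1 - x) * (1 + x)) * \<phi> x"
        by (simp only: \<open>\<psi> x = ((1 - x) * (1 + x)) * \<phi> x\<close> abs_of_nonneg[OF mult_nonneg_nonneg[OF q0 p(1)]])
      then have "\<bar>\<psi> x\<bar> \<le> 4 * \<delta>" using A by simp
      then show ?thesis using True d by (simp add: indicator_def)
    next
      case False
      then have "\<phi> x = 0" using phid_props(3)[OF d] \<phi>_def by auto
      then show ?thesis using d by (simp add: \<psi>_def indicator_def)
    qed
    then show "norm (dd1 x * complex_of_real (\<psi> x)) \<le> norm (dd1 x * complex_of_real (4 * \<delta> * indicator {1 - 2*\<delta>..<1} x))"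
      using d by (simp add: norm_mult mult_left_mono abs_of_pos)
  qed
  also have "\<dots> = (LINT x:I1|lborel. (4 * \<delta>) * (cmod (dd1 x) * indicator {1 - 2*\<delta>..<1} x))"
    using d by (intro set_lebesgue_integral_cong) (auto simp: I1_def norm_mult indicator_def)
  also have "\<dots> = 4 * \<delta> * ?T" by simp
  finally have up: "cmod (ip dd1 \<psi>) \<le> 4 * \<delta> * ?T" .
  have eqh: "ip hf \<phi> = complex_of_real (LINT x:I1|lborel. x * (\<phi> x / 2))"
    unfolding ip_def hf_def set_integral_complex_of_real[symmetric]
    by (intro set_lebesgue_integral_cong) (auto simp: I1_def)
  have low: "exp (-8) / 4 * (\<delta> / 2) \<le> (LINT x:I1|lborel. x * (\<phi> x / 2))"
  proof -
    have s1: "{1 - 7*\<delta>/4 .. 1 - 5*\<delta>/4} \<subseteq> I1" using d by (auto simp: I1_def)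
    have "(LINT x:I1|lborel. (exp (-8) / 4 :: real) * indicator {1 - 7*\<delta>/4 .. 1 - 5*\<delta>/4} x)
        = (LINT x|lborel. (exp (-8) / 4 :: real) * indicator {1 - 7*\<delta>/4 .. 1 - 5*\<delta>/4} x)"
      unfolding set_lebesgue_integral_def
      by (intro Bochner_Integration.integral_cong) (use s1 in \<open>auto simp: indicator_def\<close>)
    also have "\<dots> = exp (-8) / 4 * (\<delta> / 2)" using d by simp
    finally have e: "(LINT x:I1|lborel. (exp (-8) / 4 :: real) * indicator {1 - 7*\<delta>/4 .. 1 - 5*\<delta>/4} x) = exp (-8) / 4 * (\<delta> / 2)" .
    have "(LINT x:I1|lborel. (exp (-8) / 4 :: real) * indicator {1 - 7*\<delta>/4 .. 1 - 5*\<delta>/4} x) \<le> (LINT x:I1|lborel. x * (\<phi> x / 2))"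
    proof (rule set_integral_mono)
      show "set_integrable lborel I1 (\<lambda>x. (exp (-8) / 4 :: real) * indicator {1 - 7*\<delta>/4 .. 1 - 5*\<delta>/4} x)"
        using d by (intro bdd_int bdd_ind) simp
      have "bdd_I (\<lambda>x. \<phi> x / 2)" using b\<phi> unfolding bdd_I_def
      proof (elim conjE exE, intro conjI)
        fix B assume "\<forall>x\<in>I1. \<bar>\<phi> x\<bar> \<le> B"
        then show "\<exists>B. \<forall>x\<in>I1. \<bar>\<phi> x / 2\<bar> \<le> B" by (intro exI[of _ B]) auto
      qed auto
      then show "set_integrable lborel I1 (\<lambda>x. x * (\<phi> x / 2))" by (intro bdd_int bdd_xmult)
      fix x assume x: "x \<in> I1"
      show "(exp (-8) / 4 :: real) * indicator {1 - 7*\<delta>/4 .. 1 - 5*\<delta>/4} x \<le> x * (\<phi> x / 2)"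
      proof (cases "x \<in> {1 - 7*\<delta>/4 .. 1 - 5*\<delta>/4}")
        case True
        have "exp (-8) \<le> \<phi> x" using phid_props(4)[OF d True] \<phi>_def by simp
        moreover have "1/2 \<le> x" using True d by auto
        ultimately have "1/2 * exp (-8) \<le> x * \<phi> x" by (intro mult_mono) (auto simp: hb_nonneg)
        then show ?thesis using True by simp
      next
        case False
        have "0 \<le> x * \<phi> x"
        proof (cases "x \<in> {1 - 2*\<delta>..1 - \<delta>}")
          case True then have "0 \<le> x" using d by auto
          then show ?thesis using phid_props(1)[OF d] \<phi>_def by simp
        next
          case False then show ?thesis using phid_props(3)[OF d] \<phi>_def by simp
        qed
        then show ?thesis using False by simp
      qed
    qed
    then show ?thesis unfolding e .
  qed
  have "exp (-8) / 4 * (\<delta> / 2) \<le> cmod (ip hf \<phi>)" using low unfolding eqh by simp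
  also have "\<dots> = cmod (ip dd1 \<psi>)" using keyid[OF t] unfolding \<psi>_def by simp
  also have "\<dots> \<le> 4 * \<delta> * ?T" by (rule up)
  finally have "exp (-8) / 4 * (\<delta> / 2) \<le> 4 * \<delta> * ?T" .
  then show ?thesis using d by (simp add: field_simps)
qed




lemma no_sol:
  assumes v1: "L2_I v1" and v2: "L2_I v2"
    and w1: "weak_deriv v1 1 d1" and w2: "weak_deriv v1 2 dd1" and w3: "weak_deriv v2 1 d2"
    and ae1: "AE y in lborel. y \<in> I1 \<longrightarrow> v2 y - complex_of_real y * d1 y = complex_of_real (y/2)"
    and ae2: "AE y in lborel. y \<in> I1 \<longrightarrow> dd1 y + v2 y - complex_of_real y * d2 y = complex_of_real (y/2)"
  shows False
proof -
  have dd1: "L2_I dd1" using w2 wdL2 by blast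
  have dm[measurable]: "dd1 \<in> borel_measurable lborel" using dd1 L2_I_def by blast
  have keyid: "\<And>\<phi>. test_fun \<phi> \<Longrightarrow> ip dd1 (\<lambda>x. \<phi> x - x * (x * \<phi> x)) = ip hf \<phi>"
    by (rule key[OF v1 v2 w1 w2 w3 ae1 ae2])
  define dl where "dl n = 1 / (real n + 4)" for n :: nat
  have dl: "0 < dl n" "dl n \<le> 1/4" for n unfolding dl_def by (auto simp: field_simps)
  define s where "s n x = indicator I1 x *\<^sub>R (cmod (dd1 x) * indicator {1 - 2 * dl n..<1} x)" for n x
  have low: "exp (-8) / 32 \<le> integral\<^sup>L lborel (s n)" for n
    using lower_bound[OF dd1 keyid dl(1) dl(2), of n] unfolding s_def set_lebesgue_integral_def by simp
  have wint: "integrable lborel (\<lambda>x. indicator I1 x *\<^sub>R cmod (dd1 x))"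
  proof -
    have b1: "bdd_I (\<lambda>x. 1)" unfolding bdd_I_def by auto
    have "set_integrable lborel I1 (\<lambda>x. norm (dd1 x * complex_of_real 1))"
      by (rule set_integrable_norm[OF ip_int[OF dd1 b1]])
    then show ?thesis unfolding set_integrable_def by simp
  qed
  have lim: "(\<lambda>n. integral\<^sup>L lborel (s n)) \<longlonglongrightarrow> integral\<^sup>L lborel (\<lambda>x::real. 0::real)"
  proof (rule integral_dominated_convergence[where M=lborel and f="\<lambda>x. 0::real" and s=s and w="\<lambda>x. indicator I1 x *\<^sub>R cmod (dd1 x)"])
    show "integrable lborel (\<lambda>x. indicator I1 x *\<^sub>R cmod (dd1 x))" by (rule wint)
    show "(\<lambda>x::real. 0::real) \<in> borel_measurable lborel" by simp
    show "s n \<in> borel_measurable lborel" for n unfolding s_def by measurable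
    show "AE x in lborel. norm (s n x) \<le> indicator I1 x *\<^sub>R cmod (dd1 x)" for n
      by (intro AE_I2) (auto simp: s_def indicator_def)
    show "AE x in lborel. (\<lambda>n. s n x) \<longlonglongrightarrow> 0"
    proof (intro AE_I2)
      fix x :: real
      show "(\<lambda>n. s n x) \<longlonglongrightarrow> 0"
      proof (cases "x < 1")
        case False
        then have "s n x = 0" for n by (simp add: s_def indicator_def)
        then show ?thesis by simp
      next
        case True
        obtain N :: nat where N: "2 / (1 - x) < real N" using reals_Archimedean2 by blast
        have "s n x = 0" if "n \<ge> N" for n
        proof -
          have p: "0 < 1 - x" using True by simp
          have "2 / (1 - x) < real n + 4" using N that by linarith
          then have "2 < (real n + 4) * (1 - x)" using p by (simp add: field_simps)
          then have "2 / (real n + 4) < 1 - x" by (simp add: field_simps)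
          then have "x < 1 - 2 * dl n" unfolding dl_def by simp
          then show ?thesis by (simp add: s_def indicator_def)
        qed
        then have "eventually (\<lambda>n. s n x = 0) sequentially" unfolding eventually_sequentially by blast
        then show ?thesis by (rule tendsto_eventually)
      qed
    qed
  qed
  then have "exp (-8) / 32 \<le> integral\<^sup>L lborel (\<lambda>x::real. 0::real)"
    by (rule LIMSEQ_le_const) (use low in blast)
  then show False by simp
qed

lemma L2_scale: "L2_I g \<Longrightarrow> L2_I (\<lambda>x. g x / c)"
  unfolding L2_I_def
proof (elim conjE, intro conjI)
  assume [measurable]: "g \<in> borel_measurable lborel" and i: "set_integrable lborel I1 (\<lambda>x. (cmod (g x))\<^sup>2)"
  show "(\<lambda>x. g x / c) \<in> borel_measurable lborel" by measurable
  have "set_integrable lborel I1 (\<lambda>x. (cmod (g x))\<^sup>2 / (cmod c)^2)"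
    using i by (rule set_integrable_divide)
  then show "set_integrable lborel I1 (\<lambda>x. (cmod (g x / c))\<^sup>2)"
    by (simp add: norm_divide power_divide)
qed

lemma wd_scale: "weak_deriv f j g \<Longrightarrow> weak_deriv (\<lambda>x. f x / c) j (\<lambda>x. g x / c)"
  unfolding weak_deriv_def
proof (elim conjE, intro conjI allI impI)
  assume "L2_I g" then show "L2_I (\<lambda>x. g x / c)" by (rule L2_scale)
  fix \<phi> assume h: "\<forall>\<phi>. test_fun \<phi> \<longrightarrow> (CLBINT x:I1. g x * complex_of_real (\<phi> x)) =
        (- 1) ^ j * (CLBINT x:I1. f x * complex_of_real ((deriv ^^ j) \<phi> x))"
    and t: "test_fun \<phi>"
  have "(CLBINT x:I1. g x / c * complex_of_real (\<phi> x)) = (CLBINT x:I1. g x * complex_of_real (\<phi> x) / c)"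
    by (simp add: field_simps)
  also have "\<dots> = (CLBINT x:I1. g x * complex_of_real (\<phi> x)) / c" by (rule set_integral_divide_zero)
  also have "\<dots> = (- 1) ^ j * (CLBINT x:I1. f x * complex_of_real ((deriv ^^ j) \<phi> x)) / c"
    using h t by simp
  also have "\<dots> = (- 1) ^ j * ((CLBINT x:I1. f x * complex_of_real ((deriv ^^ j) \<phi> x) / c))"
    by (simp add: set_integral_divide_zero)
  also have "\<dots> = (- 1) ^ j * (CLBINT x:I1. f x / c * complex_of_real ((deriv ^^ j) \<phi> x))"
    by (simp add: field_simps)
  finally show "(CLBINT x:I1. g x / c * complex_of_real (\<phi> x)) =
        (- 1) ^ j * (CLBINT x:I1. f x / c * complex_of_real ((deriv ^^ j) \<phi> x))" .
qed

theorem lemmaA1: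
  shows "(\<not> (\<exists>v1 v2 d1 dd1 d2.
             sobolev_H 5 v1 \<and> sobolev_H 4 v2 \<and>
             weak_deriv v1 1 d1 \<and> weak_deriv v1 2 dd1 \<and> weak_deriv v2 1 d2 \<and>
             (AE y in lborel. y \<in> I1 \<longrightarrow>
                 v2 y - complex_of_real y * d1 y = complex_of_real (y/2) \<and>
                 dd1 y + v2 y - complex_of_real y * d2 y = complex_of_real (y/2))))
       \<and> (\<forall>v1 v2 d1 dd1 d2 (c::complex).
             sobolev_H 5 v1 \<and> sobolev_H 4 v2 \<and>
             weak_deriv v1 1 d1 \<and> weak_deriv v1 2 dd1 \<and> weak_deriv v2 1 d2 \<and>
             (AE y in lborel. y \<in> I1 \<longrightarrow>
                 v2 y - complex_of_real y * d1 y = c * complex_of_real (y/2) \<and>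
                 dd1 y + v2 y - complex_of_real y * d2 y = c * complex_of_real (y/2))
             \<longrightarrow> c = 0 \<and>
                 (AE y in lborel. y \<in> I1 \<longrightarrow>
                    v2 y - complex_of_real y * d1 y = 0 \<and>
                    dd1 y + v2 y - complex_of_real y * d2 y = 0))"
proof (rule conjI)
  show "\<not> (\<exists>v1 v2 d1 dd1 d2.
             sobolev_H 5 v1 \<and> sobolev_H 4 v2 \<and>
             weak_deriv v1 1 d1 \<and> weak_deriv v1 2 dd1 \<and> weak_deriv v2 1 d2 \<and>
             (AE y in lborel. y \<in> I1 \<longrightarrow>
                 v2 y - complex_of_real y * d1 y = complex_of_real (y/2) \<and>
                 dd1 y + v2 y - complex_of_real y * d2 y = complex_of_real (y/2)))"
  proof
    assume "\<exists>v1 v2 d1 dd1 d2.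
             sobolev_H 5 v1 \<and> sobolev_H 4 v2 \<and>
             weak_deriv v1 1 d1 \<and> weak_deriv v1 2 dd1 \<and> weak_deriv v2 1 d2 \<and>
             (AE y in lborel. y \<in> I1 \<longrightarrow>
                 v2 y - complex_of_real y * d1 y = complex_of_real (y/2) \<and>
                 dd1 y + v2 y - complex_of_real y * d2 y = complex_of_real (y/2))"
    then obtain v1 v2 d1 dd1 d2 where h: "sobolev_H 5 v1" "sobolev_H 4 v2"
      "weak_deriv v1 1 d1" "weak_deriv v1 2 dd1" "weak_deriv v2 1 d2"
      and ae: "AE y in lborel. y \<in> I1 \<longrightarrow>
                 v2 y - complex_of_real y * d1 y = complex_of_real (y/2) \<and>
                 dd1 y + v2 y - complex_of_real y * d2 y = complex_of_real (y/2)" by blast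
    show False
    proof (rule no_sol[OF _ _ h(3,4,5)])
      show "L2_I v1" "L2_I v2" using h(1,2) sobolev_H_def by auto
      show "AE y in lborel. y \<in> I1 \<longrightarrow> v2 y - complex_of_real y * d1 y = complex_of_real (y/2)"
        using ae by (rule eventually_mono) blast
      show "AE y in lborel. y \<in> I1 \<longrightarrow> dd1 y + v2 y - complex_of_real y * d2 y = complex_of_real (y/2)"
        using ae by (rule eventually_mono) blast
    qed
  qed
  show "\<forall>v1 v2 d1 dd1 d2 (c::complex).
             sobolev_H 5 v1 \<and> sobolev_H 4 v2 \<and>
             weak_deriv v1 1 d1 \<and> weak_deriv v1 2 dd1 \<and> weak_deriv v2 1 d2 \<and>
             (AE y in lborel. y \<in> I1 \<longrightarrow>
                 v2 y - complex_of_real y * d1 y = c * complex_of_real (y/2) \<and>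
                 dd1 y + v2 y - complex_of_real y * d2 y = c * complex_of_real (y/2))
             \<longrightarrow> c = 0 \<and>
                 (AE y in lborel. y \<in> I1 \<longrightarrow>
                    v2 y - complex_of_real y * d1 y = 0 \<and>
                    dd1 y + v2 y - complex_of_real y * d2 y = 0)"
  proof (intro allI impI)
    fix v1 v2 d1 dd1 d2 and c :: complex
    assume H: "sobolev_H 5 v1 \<and> sobolev_H 4 v2 \<and>
             weak_deriv v1 1 d1 \<and> weak_deriv v1 2 dd1 \<and> weak_deriv v2 1 d2 \<and>
             (AE y in lborel. y \<in> I1 \<longrightarrow>
                 v2 y - complex_of_real y * d1 y = c * complex_of_real (y/2) \<and>
                 dd1 y + v2 y - complex_of_real y * d2 y = c * complex_of_real (y/2))"
    then have h: "L2_I v1" "L2_I v2"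
      "weak_deriv v1 1 d1" "weak_deriv v1 2 dd1" "weak_deriv v2 1 d2"
      and ae: "AE y in lborel. y \<in> I1 \<longrightarrow>
                 v2 y - complex_of_real y * d1 y = c * complex_of_real (y/2) \<and>
                 dd1 y + v2 y - complex_of_real y * d2 y = c * complex_of_real (y/2)"
      using sobolev_H_def by auto
    have c0: "c = 0"
    proof (rule ccontr)
      assume c: "c \<noteq> 0"
      show False
      proof (rule no_sol[OF L2_scale[OF h(1)] L2_scale[OF h(2)] wd_scale[OF h(3)] wd_scale[OF h(4)] wd_scale[OF h(5)]])
        show "AE y in lborel. y \<in> I1 \<longrightarrow> v2 y / c - complex_of_real y * (d1 y / c) = complex_of_real (y/2)"
          using ae
        proof (rule eventually_mono, intro impI)
          fix y assume a: "y \<in> I1 \<longrightarrow>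
                 v2 y - complex_of_real y * d1 y = c * complex_of_real (y/2) \<and>
                 dd1 y + v2 y - complex_of_real y * d2 y = c * complex_of_real (y/2)" and y: "y \<in> I1"
          have "v2 y / c - complex_of_real y * (d1 y / c) = (v2 y - complex_of_real y * d1 y) / c"
            by (simp add: diff_divide_distrib)
          also have "\<dots> = c * complex_of_real (y/2) / c" using a y by simp
          also have "\<dots> = complex_of_real (y/2)" using c by simp
          finally show "v2 y / c - complex_of_real y * (d1 y / c) = complex_of_real (y/2)" .
        qed
        show "AE y in lborel. y \<in> I1 \<longrightarrow> dd1 y / c + v2 y / c - complex_of_real y * (d2 y / c) = complex_of_real (y/2)"
          using ae
        proof (rule eventually_mono, intro impI)
          fix y assume a: "y \<in> I1 \<longrightarrow>
                 v2 y - complex_of_real y * d1 y = c * complex_of_real (y/2) \<and>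
                 dd1 y + v2 y - complex_of_real y * d2 y = c * complex_of_real (y/2)" and y: "y \<in> I1"
          have "dd1 y / c + v2 y / c - complex_of_real y * (d2 y / c) = (dd1 y + v2 y - complex_of_real y * d2 y) / c"
            by (simp add: diff_divide_distrib add_divide_distrib)
          also have "\<dots> = c * complex_of_real (y/2) / c" using a y by simp
          also have "\<dots> = complex_of_real (y/2)" using c by simp
          finally show "dd1 y / c + v2 y / c - complex_of_real y * (d2 y / c) = complex_of_real (y/2)" .
        qed
      qed
    qed
    moreover have "AE y in lborel. y \<in> I1 \<longrightarrow>
                    v2 y - complex_of_real y * d1 y = 0 \<and>
                    dd1 y + v2 y - complex_of_real y * d2 y = 0"
      using ae by (rule eventually_mono) (auto simp: c0)
    ultimately show "c = 0 \<and>
                 (AE y in lborel. y \<in> I1 \<longrightarrow>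
                    v2 y - complex_of_real y * d1 y = 0 \<and>
                    dd1 y + v2 y - complex_of_real y * d2 y = 0)" by blast
  qed
qed


end
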